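(* Let $X$ be a complex vector space with $\dim_{\mathbb{C}}X\ge 2$ and $Y\neq\{0\}$ a sequentially complete Hausdorff complex locally convex space. Let $\Omega\subset X$ be a polygonally connected $2$-open set and $C\subset\Omega$ a subset such that $C-c$ is real-absorbing for some $c\in C$ (i.e. for every $x\in X$ there is $\varepsilon>0$ with $[0,\varepsilon]\cdot x\subset C-c$). Then for every $f\in\mathcal{H}_G(\Omega,Y)$, $$f(\Omega)-f(c)\subset\overline{\mathrm{span}}\big(f(C)-f(c)\big).$$ In particular $f\equiv0$ on $\Omega$ if and only if $f|_C\equiv 0$.
   Context: For $d\in\mathbb{N}^*$, $\Gamma_d(X)$ is the set of complex affine subspaces (linear varieties) $L\subset X$ of dimension $d$, each carrying its Euclidean topology, and $\Gamma_{1,d}(X)=\bigcup_{k=1}^d\Gamma_k(X)$. A set $A\subset X$ is $d$-open if $A\cap L$ is open in $L$ for every $L\in\Gamma_{1,d}(X)$. $A$ is polygonally connected if any two points of $A$ can be joined by a polygonal chain contained in $A$. For a $1$-open $\Omega\subset X$, a map $f:\Omega\to Y$ is Gâteaux holomorphic ($f\in\mathcal{H}_G(\Omega,Y)$) if for all $a\in\Omega$, $v\in X$, $\varphi\in Y^*$ there is $r>0$ such that $\lambda\mapsto\varphi(f(a+\lambda v))$ is holomorphic on the disc $\{|\lambda|<r\}$. $\overline{\mathrm{span}}$ denotes the closed linear span in $Y$. *)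

theory Defs
  imports "HOL-Analysis.Analysis"
begin

text \<open>Complex vector spaces are rendered with the library locale vector_space
  for an explicit scalar multiplication by complex numbers.\<close>

text \<open>Coordinate space C^k, realised inside nat => complex (product topology).\<close>
definition coord_space :: "nat \<Rightarrow> (nat \<Rightarrow> complex) set" where
  "coord_space k = {z. \<forall>i\<ge>k. z i = 0}"

definition is_frame :: "(complex \<Rightarrow> 'a \<Rightarrow> 'a::ab_group_add) \<Rightarrow> nat \<Rightarrow> (nat \<Rightarrow> 'a) \<Rightarrow> bool" where
  "is_frame sc k vs \<longleftrightarrow> inj_on vs {..<k} \<and> \<not> module.dependent sc (vs ` {..<k})"

definition aff_param :: "(complex \<Rightarrow> 'a \<Rightarrow> 'a::ab_group_add) \<Rightarrow> nat \<Rightarrow> 'a \<Rightarrow> (nat \<Rightarrow> 'a) \<Rightarrow> (nat \<Rightarrow> complex) \<Rightarrow> 'a" where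
  "aff_param sc k a vs z = a + (\<Sum>i<k. sc (z i) (vs i))"

definition Gamma :: "(complex \<Rightarrow> 'a \<Rightarrow> 'a::ab_group_add) \<Rightarrow> nat \<Rightarrow> 'a set set" where
  "Gamma sc k = {L. \<exists>a vs. is_frame sc k vs \<and> L = aff_param sc k a vs ` coord_space k}"

text \<open>A \<inter> L is open in L for its Euclidean topology (transported through an affine
  parametrisation; any two such parametrisations differ by a linear automorphism of C^k,
  hence a homeomorphism, so we require it for every parametrisation of L).\<close>
definition open_in_affine :: "(complex \<Rightarrow> 'a \<Rightarrow> 'a::ab_group_add) \<Rightarrow> nat \<Rightarrow> 'a set \<Rightarrow> 'a set \<Rightarrow> bool" where
  "open_in_affine sc k L A \<longleftrightarrow>
     (\<forall>a vs. is_frame sc k vs \<and> L = aff_param sc k a vs ` coord_space k \<longrightarrow>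
        openin (top_of_set (coord_space k)) {z \<in> coord_space k. aff_param sc k a vs z \<in> A})"

definition d_open :: "(complex \<Rightarrow> 'a \<Rightarrow> 'a::ab_group_add) \<Rightarrow> nat \<Rightarrow> 'a set \<Rightarrow> bool" where
  "d_open sc d A \<longleftrightarrow> (\<forall>k\<in>{1..d}. \<forall>L\<in>Gamma sc k. open_in_affine sc k L A)"

definition segm :: "(complex \<Rightarrow> 'a \<Rightarrow> 'a::ab_group_add) \<Rightarrow> 'a \<Rightarrow> 'a \<Rightarrow> 'a set" where
  "segm sc p q = {p + sc (complex_of_real t) (q - p) | t. t \<in> {0..1}}"

definition polygonally_connected :: "(complex \<Rightarrow> 'a \<Rightarrow> 'a::ab_group_add) \<Rightarrow> 'a set \<Rightarrow> bool" where
  "polygonally_connected sc A \<longleftrightarrow>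
     (\<forall>x\<in>A. \<forall>y\<in>A. \<exists>ps. ps \<noteq> [] \<and> hd ps = x \<and> last ps = y \<and>
        (\<forall>i. Suc i < length ps \<longrightarrow> segm sc (ps ! i) (ps ! Suc i) \<subseteq> A))"

definition real_absorbing :: "(complex \<Rightarrow> 'a \<Rightarrow> 'a::ab_group_add) \<Rightarrow> 'a set \<Rightarrow> bool" where
  "real_absorbing sc S \<longleftrightarrow>
     (\<forall>x. \<exists>\<epsilon>>0. \<forall>t\<in>{0..\<epsilon>}. sc (complex_of_real t) x \<in> S)"

definition convex_c :: "(complex \<Rightarrow> 'b \<Rightarrow> 'b::ab_group_add) \<Rightarrow> 'b set \<Rightarrow> bool" where
  "convex_c sc V \<longleftrightarrow> (\<forall>x\<in>V. \<forall>y\<in>V. \<forall>t\<in>{0..1::real}.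
      sc (complex_of_real (1 - t)) x + sc (complex_of_real t) y \<in> V)"

definition complex_tvs :: "(complex \<Rightarrow> 'b \<Rightarrow> 'b::{ab_group_add,topological_space}) \<Rightarrow> bool" where
  "complex_tvs sc \<longleftrightarrow> vector_space sc \<and>
     continuous_on UNIV (\<lambda>p::'b \<times> 'b. fst p + snd p) \<and>
     continuous_on UNIV (\<lambda>p::complex \<times> 'b. sc (fst p) (snd p))"

definition locally_convex :: "(complex \<Rightarrow> 'b \<Rightarrow> 'b::{ab_group_add,topological_space}) \<Rightarrow> bool" where
  "locally_convex sc \<longleftrightarrow>
     (\<forall>U. open U \<and> 0 \<in> U \<longrightarrow> (\<exists>V. open V \<and> convex_c sc V \<and> 0 \<in> V \<and> V \<subseteq> U))"

definition tvs_Cauchy :: "(nat \<Rightarrow> 'b::{ab_group_add,topological_space}) \<Rightarrow> bool" where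
  "tvs_Cauchy x \<longleftrightarrow> (\<forall>U. open U \<and> 0 \<in> U \<longrightarrow> (\<exists>N. \<forall>m\<ge>N. \<forall>n\<ge>N. x m - x n \<in> U))"

definition sequentially_complete :: "'b::{ab_group_add,topological_space} itself \<Rightarrow> bool" where
  "sequentially_complete _ \<longleftrightarrow> (\<forall>x::nat \<Rightarrow> 'b. tvs_Cauchy x \<longrightarrow> (\<exists>l. x \<longlonglongrightarrow> l))"

definition dual_space :: "(complex \<Rightarrow> 'b \<Rightarrow> 'b::{ab_group_add,topological_space}) \<Rightarrow> ('b \<Rightarrow> complex) set" where
  "dual_space sc = {\<phi>. Vector_Spaces.linear sc (*) \<phi> \<and> continuous_on UNIV \<phi>}"

definition gateaux_holomorphic ::
  "(complex \<Rightarrow> 'a \<Rightarrow> 'a::ab_group_add) \<Rightarrow> (complex \<Rightarrow> 'b \<Rightarrow> 'b::{ab_group_add,topological_space})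
    \<Rightarrow> 'a set \<Rightarrow> ('a \<Rightarrow> 'b) \<Rightarrow> bool" where
  "gateaux_holomorphic scaleX scaleY \<Omega> f \<longleftrightarrow>
     (\<forall>a\<in>\<Omega>. \<forall>v. \<forall>\<phi>\<in>dual_space scaleY. \<exists>r>0.
        (\<forall>w\<in>ball 0 r. a + scaleX w v \<in> \<Omega>) \<and>
        (\<lambda>w. \<phi> (f (a + scaleX w v))) holomorphic_on ball 0 r)"

end

theory Submission
  imports Defs "HOL-Complex_Analysis.Complex_Analysis"
begin


definition lin_graph :: "(real \<Rightarrow> 'b \<Rightarrow> 'b::ab_group_add) \<Rightarrow> ('b \<Rightarrow> real) \<Rightarrow> ('b \<times> real) set \<Rightarrow> bool" where
 "lin_graph sR p G \<longleftrightarrow> (\<forall>x r s. (x,r)\<in>G \<longrightarrow> (x,s)\<in>G \<longrightarrow> r = s) \<and>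
    (\<forall>x r y s. (x,r)\<in>G \<longrightarrow> (y,s)\<in>G \<longrightarrow> (x+y, r+s)\<in>G) \<and>
    (\<forall>a x r. (x,r)\<in>G \<longrightarrow> (sR a x, a*r)\<in>G) \<and> (\<forall>x r. (x,r)\<in>G \<longrightarrow> r \<le> p x)"

lemma HB_step:
  assumes vs: "vector_space sR"
    and sub: "\<And>x y. p (x + y) \<le> p x + p y"
    and hom: "\<And>t x. t > 0 \<Longrightarrow> p (sR t x) = t * p x"
    and G: "lin_graph sR p G" and ne: "G \<noteq> {}"
    and x0: "x0 \<notin> fst ` G"
  shows "\<exists>G'. lin_graph sR p G' \<and> G \<subseteq> G' \<and> G' \<noteq> G"
proof -
  interpret vector_space sR by (rule vs)
  have fn: "\<And>x r s. (x,r)\<in>G \<Longrightarrow> (x,s)\<in>G \<Longrightarrow> r = s"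
    and add: "\<And>x r y s. (x,r)\<in>G \<Longrightarrow> (y,s)\<in>G \<Longrightarrow> (x+y, r+s)\<in>G"
    and sc: "\<And>a x r. (x,r)\<in>G \<Longrightarrow> (sR a x, a*r)\<in>G"
    and bd: "\<And>x r. (x,r)\<in>G \<Longrightarrow> r \<le> p x"
    using G unfolding lin_graph_def by blast+
  obtain z0 r0 where z0: "(z0,r0) \<in> G" using ne by auto
  have zero: "(0,0) \<in> G" using sc[OF z0, of 0] by simp
  define A where "A = {r - p (d - x0) | d r. (d,r) \<in> G}"
  define c where "c = Sup A"
  have key: "r1 - p (d1 - x0) \<le> p (d2 + x0) - r2" if "(d1,r1)\<in>G" "(d2,r2)\<in>G" for d1 r1 d2 r2
  proof -
    have "r1 + r2 \<le> p (d1 + d2)" using bd[OF add[OF that]] .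
    also have "d1 + d2 = (d1 - x0) + (d2 + x0)" by (simp add: algebra_simps)
    also have "p ((d1 - x0) + (d2 + x0)) \<le> p (d1 - x0) + p (d2 + x0)" by (rule sub)
    finally show ?thesis by simp
  qed
  have Ane: "A \<noteq> {}" using zero unfolding A_def by blast
  have Abd: "bdd_above A" unfolding A_def bdd_above_def using key[OF _ zero] by auto
  have c1: "r - p (d - x0) \<le> c" if "(d,r)\<in>G" for d r
    unfolding c_def using that Abd by (intro cSup_upper) (auto simp: A_def)
  have c2: "c \<le> p (d + x0) - r" if "(d,r)\<in>G" for d r
    unfolding c_def using that Ane by (intro cSup_least) (auto simp: A_def intro: key)
  define G' where "G' = {(d + sR t x0, r + t * c) | d r t. (d,r) \<in> G}"
  have x0G': "(x0, c) \<in> G'" proof -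
    have "(x0, c) = (0 + sR 1 x0, 0 + 1 * c)" by simp
    thus ?thesis unfolding G'_def using zero by blast
  qed
  have GG': "G \<subseteq> G'"
  proof
    fix z assume "z \<in> G"
    moreover have "z = (fst z + sR 0 x0, snd z + 0 * c)" by simp
    ultimately show "z \<in> G'" unfolding G'_def by (metis (mono_tags, lifting) mem_Collect_eq prod.collapse)
  qed
  have neq: "G' \<noteq> G" using x0G' x0 by (metis fst_conv image_eqI)
  have "lin_graph sR p G'"
    unfolding lin_graph_def
  proof (intro conjI allI impI)
    fix x r s assume "(x,r)\<in>G'" "(x,s)\<in>G'"
    then obtain d1 r1 t1 d2 r2 t2 where h: "(d1,r1)\<in>G" "(d2,r2)\<in>G" "x = d1 + sR t1 x0" "r = r1 + t1*c"
      "x = d2 + sR t2 x0" "s = r2 + t2*c" unfolding G'_def by blast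
    have t: "t1 = t2"
    proof (rule ccontr)
      assume ne: "t1 \<noteq> t2"
      have "sR (t1 - t2) x0 = d2 - d1" using h(3,5) by (simp add: algebra_simps)
      hence "sR (inverse (t1 - t2)) (sR (t1 - t2) x0) = sR (inverse (t1 - t2)) (d2 - d1)" by simp
      hence "x0 = sR (inverse (t1 - t2)) (d2 - d1)" using ne by simp
      moreover have "(d2 - d1, r2 - r1) \<in> G" using add[OF h(2) sc[OF h(1), of "-1"]] by simp
      ultimately have "(x0, inverse (t1 - t2) * (r2 - r1)) \<in> G" using sc by metis
      thus False using x0 by (metis fst_conv image_eqI)
    qed
    hence "d1 = d2" using h by simp
    thus "r = s" using h fn t by metis
  next
    fix x r y s assume "(x,r)\<in>G'" "(y,s)\<in>G'"
    then obtain d1 r1 t1 d2 r2 t2 where h: "(d1,r1)\<in>G" "(d2,r2)\<in>G" "x = d1 + sR t1 x0" "r = r1 + t1*c"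
      "y = d2 + sR t2 x0" "s = r2 + t2*c" unfolding G'_def by blast
    have "x + y = (d1 + d2) + sR (t1 + t2) x0" "r + s = (r1 + r2) + (t1 + t2) * c"
      using h by (simp_all add: algebra_simps)
    thus "(x+y, r+s) \<in> G'" unfolding G'_def using add[OF h(1,2)] by blast
  next
    fix a x r assume "(x,r)\<in>G'"
    then obtain d1 r1 t1 where h: "(d1,r1)\<in>G" "x = d1 + sR t1 x0" "r = r1 + t1*c"
      unfolding G'_def by blast
    have "sR a x = sR a d1 + sR (a*t1) x0" "a * r = a * r1 + (a*t1) * c"
      using h by (simp_all add: algebra_simps)
    thus "(sR a x, a*r) \<in> G'" unfolding G'_def using sc[OF h(1)] by blast
  next
    fix x r assume "(x,r)\<in>G'"
    then obtain d r1 t where h: "(d,r1)\<in>G" "x = d + sR t x0" "r = r1 + t*c"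
      unfolding G'_def by blast
    consider "t = 0" | "t > 0" | "t < 0" by linarith
    thus "r \<le> p x"
    proof cases
      case 1 thus ?thesis using h bd by simp
    next
      case 2
      have m: "(sR (inverse t) d, inverse t * r1) \<in> G" using sc[OF h(1)] .
      have "c \<le> p (sR (inverse t) d + x0) - inverse t * r1" using c2[OF m] .
      hence "t * c \<le> t * (p (sR (inverse t) d + x0) - inverse t * r1)" using 2 by (simp add: mult_left_mono)
      hence "t * c \<le> t * p (sR (inverse t) d + x0) - r1" using 2 by (simp add: right_diff_distrib mult.assoc[symmetric])
      also have "t * p (sR (inverse t) d + x0) = p (sR t (sR (inverse t) d + x0))" using hom[OF 2] by simp
      also have "sR t (sR (inverse t) d + x0) = x" using 2 h by (simp add: algebra_simps)
      finally show ?thesis using h by simp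
    next
      case 3
      define s where "s = - t"
      have s: "s > 0" using 3 s_def by simp
      have m: "(sR (inverse s) d, inverse s * r1) \<in> G" using sc[OF h(1)] .
      have "inverse s * r1 - p (sR (inverse s) d - x0) \<le> c" using c1[OF m] .
      hence "s * (inverse s * r1 - p (sR (inverse s) d - x0)) \<le> s * c" using s by (simp add: mult_left_mono)
      hence "r1 - s * p (sR (inverse s) d - x0) \<le> s * c" using s by (simp add: algebra_simps)
      also have "s * p (sR (inverse s) d - x0) = p (sR s (sR (inverse s) d - x0))" using hom[OF s] by simp
      also have "sR s (sR (inverse s) d - x0) = x" using s h by (simp add: algebra_simps s_def)
      finally show ?thesis using h s_def by simp
    qed
  qed
  thus ?thesis using GG' neq by blast
qed

lemma lin_graph_chain_Union:
  assumes C: "C \<in> chains {G. lin_graph sR p G \<and> G0 \<subseteq> G}" and ne: "C \<noteq> {}"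
  shows "lin_graph sR p (\<Union>C) \<and> G0 \<subseteq> \<Union>C"
proof -
  have sub: "C \<subseteq> {G. lin_graph sR p G \<and> G0 \<subseteq> G}" and ch: "\<And>X Y. X\<in>C \<Longrightarrow> Y\<in>C \<Longrightarrow> X \<subseteq> Y \<or> Y \<subseteq> X"
    using C unfolding chains_def chain_subset_def by blast+
  have two: "\<exists>G\<in>C. (x,r)\<in>G \<and> (y,s)\<in>G" if a: "(x,r)\<in>\<Union>C" "(y,s)\<in>\<Union>C" for x r y s
  proof -
    obtain X Y where "X\<in>C" "Y\<in>C" "(x,r)\<in>X" "(y,s)\<in>Y" using a by blast
    thus ?thesis using ch[of X Y] by blast
  qed
  have lg: "\<And>G. G \<in> C \<Longrightarrow> lin_graph sR p G" using sub by blast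
  show ?thesis
    unfolding lin_graph_def
  proof (intro conjI allI impI)
    fix x r s assume a: "(x,r)\<in>\<Union>C" "(x,s)\<in>\<Union>C"
    then obtain G where "G\<in>C" "(x,r)\<in>G" "(x,s)\<in>G" using two by blast
    thus "r = s" using lg unfolding lin_graph_def by blast
  next
    fix x r y s assume a: "(x,r)\<in>\<Union>C" "(y,s)\<in>\<Union>C"
    then obtain G where "G\<in>C" "(x,r)\<in>G" "(y,s)\<in>G" using two by blast
    thus "(x+y, r+s)\<in>\<Union>C" using lg unfolding lin_graph_def by blast
  next
    fix a x r assume a: "(x,r)\<in>\<Union>C"
    then obtain G where "G\<in>C" "(x,r)\<in>G" by blast
    thus "(sR a x, a*r)\<in>\<Union>C" using lg unfolding lin_graph_def by blast
  next
    fix x r assume a: "(x,r)\<in>\<Union>C"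
    then obtain G where "G\<in>C" "(x,r)\<in>G" by blast
    thus "r \<le> p x" using lg unfolding lin_graph_def by blast
  next
    show "G0 \<subseteq> \<Union>C" using ne sub by blast
  qed
qed

lemma HB_graph:
  assumes vs: "vector_space sR"
    and sub: "\<And>x y. p (x + y) \<le> p x + p y"
    and hom: "\<And>t x. t > 0 \<Longrightarrow> p (sR t x) = t * p x"
    and G0: "lin_graph sR p G0" and ne: "G0 \<noteq> {}"
  shows "\<exists>\<psi>. (\<forall>x y. \<psi> (x+y) = \<psi> x + \<psi> y) \<and> (\<forall>a x. \<psi> (sR a x) = a * \<psi> x)
     \<and> (\<forall>x. \<psi> x \<le> p x) \<and> (\<forall>x r. (x,r) \<in> G0 \<longrightarrow> \<psi> x = r)"
proof -
  define A where "A = {G. lin_graph sR p G \<and> G0 \<subseteq> G}"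
  have "\<forall>C\<in>chains A. \<exists>U\<in>A. \<forall>X\<in>C. X \<subseteq> U"
  proof
    fix C assume C: "C \<in> chains A"
    show "\<exists>U\<in>A. \<forall>X\<in>C. X \<subseteq> U"
    proof (cases "C = {}")
      case True thus ?thesis using G0 unfolding A_def by blast
    next
      case False thus ?thesis using lin_graph_chain_Union[OF C[unfolded A_def] False] unfolding A_def by blast
    qed
  qed
  from Zorn_Lemma2[OF this] obtain M where M: "M \<in> A" and max: "\<And>X. X\<in>A \<Longrightarrow> M \<subseteq> X \<Longrightarrow> X = M" by blast
  have lM: "lin_graph sR p M" and G0M: "G0 \<subseteq> M" using M unfolding A_def by auto
  have Mne: "M \<noteq> {}" using G0M ne by blast
  have dom: "\<exists>r. (x,r) \<in> M" for x
  proof (rule ccontr)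
    assume "\<not> (\<exists>r. (x,r) \<in> M)"
    hence "x \<notin> fst ` M" by force
    from HB_step[OF vs sub hom lM Mne this] obtain G' where "lin_graph sR p G'" "M \<subseteq> G'" "G' \<noteq> M" by blast
    thus False using max[of G'] G0M unfolding A_def by blast
  qed
  have fn: "\<And>x r s. (x,r)\<in>M \<Longrightarrow> (x,s)\<in>M \<Longrightarrow> r = s"
    and add: "\<And>x r y s. (x,r)\<in>M \<Longrightarrow> (y,s)\<in>M \<Longrightarrow> (x+y, r+s)\<in>M"
    and sc: "\<And>a x r. (x,r)\<in>M \<Longrightarrow> (sR a x, a*r)\<in>M"
    and bd: "\<And>x r. (x,r)\<in>M \<Longrightarrow> r \<le> p x"
    using lM unfolding lin_graph_def by blast+
  define \<psi> where "\<psi> x = (THE r. (x,r) \<in> M)" for x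
  have psi: "(x, \<psi> x) \<in> M" for x
    unfolding \<psi>_def using dom[of x] fn by (metis theI)
  have psi_eq: "\<psi> x = r" if "(x,r)\<in>M" for x r using fn[OF psi that] .
  show ?thesis
  proof (intro exI[of _ \<psi>] conjI allI impI)
    fix x y show "\<psi> (x+y) = \<psi> x + \<psi> y" using psi_eq[OF add[OF psi psi]] .
  next
    fix a x show "\<psi> (sR a x) = a * \<psi> x" using psi_eq[OF sc[OF psi]] .
  next
    fix x show "\<psi> x \<le> p x" using bd[OF psi] .
  next
    fix x r assume "(x,r)\<in>G0" thus "\<psi> x = r" using psi_eq G0M by blast
  qed
qed



lemma gauge_props:
  fixes sR :: "real \<Rightarrow> 'b \<Rightarrow> 'b::ab_group_add"
  assumes vs: "vector_space sR"
    and cvx0: "\<forall>x\<in>V. \<forall>y\<in>V. \<forall>t. 0 \<le> t \<and> t \<le> 1 \<longrightarrow> sR (1-t) x + sR t y \<in> V"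
    and V0: "0 \<in> V"
    and abs: "\<And>z. \<exists>t>0. sR t z \<in> V"
    and p_def: "\<And>z. p z = Inf {t. 0 < t \<and> sR (inverse t) z \<in> V}"
  shows "\<And>z. 0 \<le> p z" "\<And>x y. p (x + y) \<le> p x + p y" "\<And>t x. t > 0 \<Longrightarrow> p (sR t x) = t * p x"
    "\<And>z. p z < 1 \<Longrightarrow> z \<in> V" "\<And>z. z \<in> V \<Longrightarrow> p z \<le> 1"
proof -
  interpret vector_space sR by (rule vs)
  have cvx: "\<And>x y t. x\<in>V \<Longrightarrow> y\<in>V \<Longrightarrow> 0 \<le> t \<Longrightarrow> t \<le> 1 \<Longrightarrow> sR (1-t) x + sR t y \<in> V"
    using cvx0 by blast
  define T where "T z = {t. 0 < t \<and> sR (inverse t) z \<in> V}" for z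
  have pT: "p z = Inf (T z)" for z using p_def T_def by simp
  have Tne: "T z \<noteq> {}" for z
  proof -
    obtain t where "t > 0" "sR t z \<in> V" using abs by blast
    hence "inverse t \<in> T z" unfolding T_def by simp
    thus ?thesis by blast
  qed
  have Tbd: "bdd_below (T z)" for z unfolding T_def bdd_below_def by (auto intro: less_imp_le)
  have up: "t' \<in> T z" if "t \<in> T z" "t \<le> t'" for t t' z
  proof -
    have t: "t > 0" "sR (inverse t) z \<in> V" using that unfolding T_def by auto
    have "sR (1 - t/t') 0 + sR (t/t') (sR (inverse t) z) \<in> V"
      using cvx[OF V0 t(2), of "t/t'"] t that by simp
    also have "sR (1 - t/t') 0 + sR (t/t') (sR (inverse t) z) = sR (inverse t') z"
      using t by (simp add: field_simps)
    finally show ?thesis using t that unfolding T_def by simp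
  qed
  show pos: "0 \<le> p z" for z unfolding pT using Tne by (intro cInf_greatest) (auto simp: T_def)
  show "p z < 1 \<Longrightarrow> z \<in> V" for z
  proof -
    assume "p z < 1"
    then obtain t where "t \<in> T z" "t < 1" unfolding pT using Tne cInf_lessD by blast
    hence "1 \<in> T z" using up by fastforce
    thus "z \<in> V" unfolding T_def by simp
  qed
  show "z \<in> V \<Longrightarrow> p z \<le> 1" for z
  proof -
    assume "z \<in> V" hence "1 \<in> T z" unfolding T_def by simp
    thus "p z \<le> 1" unfolding pT using Tbd by (rule cInf_lower)
  qed
  show "p (x + y) \<le> p x + p y" for x y
  proof -
    have *: "s + t \<in> T (x + y)" if "s \<in> T x" "t \<in> T y" for s t
    proof -
      have s: "s > 0" "sR (inverse s) x \<in> V" and t: "t > 0" "sR (inverse t) y \<in> V" using that unfolding T_def by auto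
      have "sR (1 - t/(s+t)) (sR (inverse s) x) + sR (t/(s+t)) (sR (inverse t) y) \<in> V"
        using cvx[OF s(2) t(2), of "t/(s+t)"] s t by simp
      also have "sR (1 - t/(s+t)) (sR (inverse s) x) + sR (t/(s+t)) (sR (inverse t) y) = sR (inverse (s+t)) (x + y)"
        using s t by (simp add: field_simps scale_right_distrib)
      finally show ?thesis using s t unfolding T_def by simp
    qed
    have "p (x+y) - t \<le> p x" if t: "t \<in> T y" for t
      unfolding pT[of x] using Tne
    proof (intro cInf_greatest)
      fix s assume "s \<in> T x"
      hence "p (x+y) \<le> s + t" unfolding pT using *[OF _ t] Tbd cInf_lower by blast
      thus "p (x+y) - t \<le> s" by simp
    qed simp
    hence "p (x+y) - p x \<le> p y" unfolding pT[of y] using Tne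
      by (intro cInf_greatest) (auto simp: algebra_simps)
    thus ?thesis by simp
  qed
  have le: "p (sR t x) \<le> t * p x" if t: "t > 0" for t x
  proof -
    have "p (sR t x) / t \<le> p x" unfolding pT[of x] using Tne
    proof (intro cInf_greatest)
      fix s assume s: "s \<in> T x"
      hence "t * s \<in> T (sR t x)" using t unfolding T_def by (simp add: field_simps)
      hence "p (sR t x) \<le> t * s" unfolding pT using Tbd cInf_lower by blast
      thus "p (sR t x) / t \<le> s" using t by (simp add: divide_simps mult.commute)
    qed simp
    thus ?thesis using t by (simp add: divide_simps mult.commute)
  qed
  show "t > 0 \<Longrightarrow> p (sR t x) = t * p x" for t x
  proof -
    assume t: "t > 0"
    have "p x = p (sR (inverse t) (sR t x))" using t by simp
    also have "\<dots> \<le> inverse t * p (sR t x)" using le[of "inverse t" "sR t x"] t by simp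
    finally have "t * p x \<le> p (sR t x)" using t by (simp add: field_simps)
    thus ?thesis using le[OF t, of x] by simp
  qed
qed



definition gat :: "(complex \<Rightarrow> 'a \<Rightarrow> 'a::ab_group_add) \<Rightarrow> 'a set \<Rightarrow> ('a \<Rightarrow> complex) \<Rightarrow> bool" where
  "gat sX \<Omega> h \<longleftrightarrow> (\<forall>a\<in>\<Omega>. \<forall>v. \<exists>r>0. (\<forall>w\<in>ball 0 r. a + sX w v \<in> \<Omega>) \<and>
        (\<lambda>w. h (a + sX w v)) holomorphic_on ball 0 r)"

lemma line_lemma:
  assumes vs: "vector_space sX" and G: "gat sX \<Omega> h" and x: "x \<in> \<Omega>" and \<rho>: "\<rho> > 0"
    and z0: "\<And>w. norm w < \<rho> \<Longrightarrow> h (x + sX w u) = 0"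
    and seg: "\<And>t. t\<in>{0..1} \<Longrightarrow> x + sX (complex_of_real t) u \<in> \<Omega>"
    and t: "t \<in> {0..1}"
  shows "\<exists>r>0. \<forall>w. norm (w - complex_of_real t) < r \<longrightarrow> h (x + sX w u) = 0"
proof -
  interpret vector_space sX by (rule vs)
  define U where "U = {w. x + sX w u \<in> \<Omega>}"
  define F where "F w = h (x + sX w u)" for w
  have loc: "\<exists>r>0. ball w0 r \<subseteq> U \<and> (\<exists>f'. (F has_field_derivative f') (at w0))" if w0: "w0 \<in> U" for w0
  proof -
    define a where "a = x + sX w0 u"
    have "a \<in> \<Omega>" using w0 unfolding U_def a_def by simp
    then obtain r where r: "r > 0" "\<forall>w\<in>ball 0 r. a + sX w u \<in> \<Omega>"
        "(\<lambda>w. h (a + sX w u)) holomorphic_on ball 0 r"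
      using G unfolding gat_def by blast
    have eq: "a + sX (w - w0) u = x + sX w u" for w
      unfolding a_def by (simp add: scale_left_diff_distrib)
    have "ball w0 r \<subseteq> U"
    proof
      fix w assume "w \<in> ball w0 r"
      hence "w - w0 \<in> ball 0 r" by (simp add: dist_norm norm_minus_commute)
      hence "a + sX (w - w0) u \<in> \<Omega>" using r(2) by blast
      thus "w \<in> U" unfolding U_def eq by simp
    qed
    moreover obtain f' where f': "((\<lambda>w. h (a + sX w u)) has_field_derivative f') (at 0)"
    proof -
      have "\<forall>z\<in>ball 0 r. \<exists>f'. ((\<lambda>w. h (a + sX w u)) has_field_derivative f') (at z)"
        using r(3) holomorphic_on_open[of "ball 0 r"] by simp
      moreover have "(0::complex) \<in> ball 0 r" using r(1) by simp
      ultimately show ?thesis using that by blast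
    qed
    have "((\<lambda>w. h (a + sX (w - w0) u)) has_field_derivative f' * 1) (at w0)"
      by (rule DERIV_chain2[where g="\<lambda>w. w - w0" and f="\<lambda>w. h (a + sX w u)"]) (auto simp: f' intro!: derivative_eq_intros)
    hence "(F has_field_derivative f') (at w0)" unfolding F_def eq by simp
    ultimately show ?thesis using r(1) by blast
  qed
  have openU: "open U" unfolding open_contains_ball using loc by blast
  have holU: "F holomorphic_on U" unfolding holomorphic_on_open[OF openU] using loc by blast
  define S where "S = connected_component_set U 0"
  have "0 \<in> U" unfolding U_def using x by simp
  hence S0: "0 \<in> S" unfolding S_def by (simp add: connected_component_refl)
  have openS: "open S" unfolding S_def using openU by (rule open_connected_component)
  have SU: "S \<subseteq> U" unfolding S_def by (rule connected_component_subset)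
  obtain e0 where e0: "e0 > 0" "ball 0 e0 \<subseteq> S" using openS S0 open_contains_ball by blast
  have FS: "F w = 0" if "w \<in> S" for w
  proof (rule analytic_continuation[of F S "ball 0 (min e0 \<rho>)" 0])
    show "F holomorphic_on S" using holU SU by (rule holomorphic_on_subset)
    show "open S" "connected S" "0 \<in> S" "w \<in> S" using openS S0 that unfolding S_def by auto
    show "ball 0 (min e0 \<rho>) \<subseteq> S" using e0 by auto
    show "(0::complex) islimpt ball 0 (min e0 \<rho>)" using e0 \<rho> by (subst islimpt_ball) auto
    show "F z = 0" if "z \<in> ball 0 (min e0 \<rho>)" for z using that z0 unfolding F_def by simp
  qed
  have "(\<lambda>s. complex_of_real s) ` {0..1} \<subseteq> S"
    unfolding S_def
  proof (rule connected_component_maximal)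
    show "0 \<in> (\<lambda>s. complex_of_real s) ` {0..1}" by force
    show "connected ((\<lambda>s. complex_of_real s) ` {0..1})"
      by (intro connected_continuous_image continuous_intros) auto
    show "(\<lambda>s. complex_of_real s) ` {0..1} \<subseteq> U" using seg unfolding U_def by auto
  qed
  hence "complex_of_real t \<in> S" using t by auto
  then obtain r where r: "r > 0" "ball (complex_of_real t) r \<subseteq> S" using openS open_contains_ball by blast
  show ?thesis
  proof (intro exI[of _ r] conjI allI impI)
    show "r > 0" by (rule r(1))
    fix w assume "norm (w - complex_of_real t) < r"
    hence "w \<in> S" using r(2) by (auto simp: dist_norm norm_minus_commute)
    thus "h (x + sX w u) = 0" using FS unfolding F_def by simp
  qed
qed

lemma start_lemma:
  assumes vs: "vector_space sX" and G: "gat sX \<Omega> h" and c: "c \<in> \<Omega>"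
    and ra: "real_absorbing sX ((\<lambda>x. x - c) ` C)" and hC: "\<And>x. x \<in> C \<Longrightarrow> h x = 0"
  shows "\<exists>r>0. \<forall>w. norm w < r \<longrightarrow> h (c + sX w v) = 0"
proof -
  interpret vector_space sX by (rule vs)
  obtain \<epsilon> where \<epsilon>: "\<epsilon> > 0" "\<forall>t\<in>{0..\<epsilon>}. sX (complex_of_real t) v \<in> (\<lambda>x. x - c) ` C"
    using ra unfolding real_absorbing_def by blast
  have hz: "h (c + sX (complex_of_real t) v) = 0" if "t \<in> {0..\<epsilon>}" for t
  proof -
    have "sX (complex_of_real t) v \<in> (\<lambda>x. x - c) ` C" using \<epsilon>(2) that by (rule bspec)
    then obtain x where x: "x \<in> C" "sX (complex_of_real t) v = x - c" by (rule imageE)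
    have "c + sX (complex_of_real t) v = x" unfolding x(2) by (metis add.commute diff_add_cancel)
    thus ?thesis using hC[OF x(1)] by (rule ssubst)
  qed
  obtain r where r: "r > 0" "(\<lambda>w. h (c + sX w v)) holomorphic_on ball 0 r"
    using G c unfolding gat_def by blast
  define \<delta> where "\<delta> = min \<epsilon> (r/2)"
  have \<delta>: "\<delta> > 0" using \<epsilon> r unfolding \<delta>_def by simp
  show ?thesis
  proof (intro exI[of _ r] conjI allI impI)
    show "r > 0" by (rule r(1))
    fix w :: complex assume w: "norm w < r"
    show "h (c + sX w v) = 0"
    proof (rule analytic_continuation[of "\<lambda>w. h (c + sX w v)" "ball 0 r" "(\<lambda>t. complex_of_real t) ` {0<..\<delta>}" 0])
      show "(\<lambda>w. h (c + sX w v)) holomorphic_on ball 0 r" by (rule r(2))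
      show "open (ball (0::complex) r)" "connected (ball (0::complex) r)" by auto
      show "(0::complex) \<in> ball 0 r" "w \<in> ball 0 r" using r w by auto
      have dr: "\<delta> < r" "\<delta> \<le> \<epsilon>" using r unfolding \<delta>_def by auto
      show "(\<lambda>t. complex_of_real t) ` {0<..\<delta>} \<subseteq> ball 0 r"
      proof
        fix z assume "z \<in> (\<lambda>t. complex_of_real t) ` {0<..\<delta>}"
        then obtain t where t: "t \<in> {0<..\<delta>}" "z = complex_of_real t" by blast
        thus "z \<in> ball 0 r" using dr by simp
      qed
      show "(0::complex) islimpt (\<lambda>t. complex_of_real t) ` {0<..\<delta>}"
        unfolding islimpt_approachable
      proof (intro allI impI)
        fix e :: real assume e: "e > 0"
        define t where "t = min \<delta> (e/2)"
        have tt: "0 < t" "t \<le> \<delta>" "t < e" using \<delta> e unfolding t_def by auto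
        have "complex_of_real t \<in> (\<lambda>t. complex_of_real t) ` {0<..\<delta>}" using tt by auto
        moreover have "complex_of_real t \<noteq> 0" "dist (complex_of_real t) 0 < e" using tt by auto
        ultimately show "\<exists>x'\<in>(\<lambda>t. complex_of_real t) ` {0<..\<delta>}. x' \<noteq> 0 \<and> dist x' 0 < e" by blast
      qed
      show "h (c + sX z v) = 0" if zz: "z \<in> (\<lambda>t. complex_of_real t) ` {0<..\<delta>}" for z
      proof -
        obtain t where t: "t \<in> {0<..\<delta>}" "z = complex_of_real t" using zz by blast
        hence "t \<in> {0..\<epsilon>}" using dr by auto
        thus ?thesis using hz t by simp
      qed
    qed
  qed
qed

lemma plane_open:
  assumes vs: "vector_space sX" and Om: "d_open sX 2 \<Omega>" and u0: "u \<noteq> 0" and ind: "\<not> (\<exists>a. v = sX a u)"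
  shows "open {p::complex\<times>complex. x + sX (fst p) u + sX (snd p) v \<in> \<Omega>}"
proof -
  interpret vector_space sX by (rule vs)
  define vf where "vf = (\<lambda>i::nat. if i = 0 then u else v)"
  have two: "{..<(2::nat)} = {0,1}" by auto
  have uv: "u \<noteq> v"
  proof
    assume "u = v" hence "v = sX 1 u" by simp
    thus False using ind by blast
  qed
  have v0: "v \<noteq> 0"
  proof
    assume "v = 0" hence "v = sX 0 u" by simp
    thus False using ind by blast
  qed
  have "u \<notin> span {v}"
  proof
    assume "u \<in> span {v}"
    then obtain k where k: "u = sX k v" by (auto simp: span_singleton)
    hence "k \<noteq> 0" using u0 by auto
    hence "v = sX (inverse k) u" using k by simp
    thus False using ind by blast
  qed
  hence indep: "\<not> dependent {u, v}"
    using uv v0 by (simp add: independent_insert)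
  have frame: "is_frame sX 2 vf"
    unfolding is_frame_def two vf_def using uv indep by (auto simp: inj_on_def insert_commute)
  define L where "L = aff_param sX 2 x vf ` coord_space 2"
  have "L \<in> Gamma sX 2" unfolding Gamma_def L_def using frame by blast
  hence "open_in_affine sX 2 L \<Omega>" using Om unfolding d_open_def by auto
  hence "openin (top_of_set (coord_space 2)) {z \<in> coord_space 2. aff_param sX 2 x vf z \<in> \<Omega>}"
    unfolding open_in_affine_def L_def using frame by blast
  then obtain T where T: "open T" "{z \<in> coord_space 2. aff_param sX 2 x vf z \<in> \<Omega>} = coord_space 2 \<inter> T"
    unfolding openin_open by blast
  define j where "j p = (\<lambda>i::nat. if i = 0 then fst p else if i = 1 then snd p else (0::complex))" for p :: "complex \<times> complex"
  have jc: "j p \<in> coord_space 2" for p unfolding j_def coord_space_def by auto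
  have ja: "aff_param sX 2 x vf (j p) = x + sX (fst p) u + sX (snd p) v" for p
    unfolding aff_param_def two j_def vf_def by (simp add: add.assoc)
  have cj: "continuous_on UNIV j"
  proof (rule continuous_on_coordinatewise_then_product)
    fix i
    show "continuous_on UNIV (\<lambda>p. j p i)"
    proof -
      consider "i = 0" | "i = 1" | "i \<noteq> 0 \<and> i \<noteq> 1" by blast
      thus ?thesis
      proof cases
        case 1 hence eq: "(\<lambda>p. j p i) = fst" unfolding j_def by auto
        show ?thesis unfolding eq using continuous_on_fst[OF continuous_on_id'[of UNIV]] by simp
      next
        case 2 hence eq: "(\<lambda>p. j p i) = snd" unfolding j_def by auto
        show ?thesis unfolding eq using continuous_on_snd[OF continuous_on_id'[of UNIV]] by simp
      next
        case 3 hence eq: "(\<lambda>p. j p i) = (\<lambda>p. 0)" unfolding j_def by auto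
        show ?thesis unfolding eq by simp
      qed
    qed
  qed
  have "{p::complex\<times>complex. x + sX (fst p) u + sX (snd p) v \<in> \<Omega>} = j -` T"
  proof (intro set_eqI iffI)
    fix p assume "p \<in> {p::complex\<times>complex. x + sX (fst p) u + sX (snd p) v \<in> \<Omega>}"
    hence "j p \<in> {z \<in> coord_space 2. aff_param sX 2 x vf z \<in> \<Omega>}" using ja jc by simp
    thus "p \<in> j -` T" using T(2) by blast
  next
    fix p assume "p \<in> j -` T"
    hence "j p \<in> {z \<in> coord_space 2. aff_param sX 2 x vf z \<in> \<Omega>}" using T(2) jc[of p] by blast
    thus "p \<in> {p::complex\<times>complex. x + sX (fst p) u + sX (snd p) v \<in> \<Omega>}" using ja by simp
  qed
  thus ?thesis using open_vimage[OF T(1) cj] by simp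
qed

lemma dist00:
  fixes a b :: complex
  shows "dist (a, b) (0, 0) \<le> norm a + norm b"
  using sqrt_sum_squares_le_sum[of "norm a" "norm b"] by (simp add: dist_Pair_Pair)

lemma seg_step:
  assumes vs: "vector_space sX" and G: "gat sX \<Omega> h" and Om: "d_open sX 2 \<Omega>" and xO: "x \<in> \<Omega>"
    and xZ: "\<And>v. \<exists>r>0. \<forall>w. norm w < r \<longrightarrow> h (x + sX w v) = 0"
    and sg: "segm sX x y \<subseteq> \<Omega>"
  shows "\<exists>r>0. \<forall>w. norm w < r \<longrightarrow> h (y + sX w v) = 0"
proof -
  interpret vector_space sX by (rule vs)
  define u where "u = y - x"
  have yxu: "y = x + u" unfolding u_def by simp
  have seg: "x + sX (complex_of_real t) u \<in> \<Omega>" if "t \<in> {0..1}" for t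
    using sg that unfolding segm_def u_def by blast
  consider "u = 0" | "u \<noteq> 0" "\<exists>a. v = sX a u" | "u \<noteq> 0" "\<not> (\<exists>a. v = sX a u)" by blast
  thus ?thesis
  proof cases
    case 1 thus ?thesis using xZ yxu by simp
  next
    case 2
    then obtain a where a: "v = sX a u" by blast
    obtain \<rho> where \<rho>: "\<rho> > 0" "\<forall>w. norm w < \<rho> \<longrightarrow> h (x + sX w u) = 0" using xZ by blast
    obtain r1 where r1: "r1 > 0" "\<forall>w. norm (w - complex_of_real 1) < r1 \<longrightarrow> h (x + sX w u) = 0"
      using line_lemma[OF vs G xO \<rho>(1) _ seg, of 1] \<rho>(2) by auto
    define r where "r = r1 / (norm a + 1)"
    have na: "norm a + 1 > 0" by (simp add: add_nonneg_pos)
    have q: "norm a / (norm a + 1) < 1" using na by (simp add: divide_less_eq)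
    have r: "r > 0" unfolding r_def using r1(1) na by (rule divide_pos_pos)
    show ?thesis
    proof (intro exI[of _ r] conjI allI impI)
      show "r > 0" by (rule r)
      fix w :: complex assume w: "norm w < r"
      have eq: "y + sX w v = x + sX (1 + w * a) u" unfolding yxu a by (simp add: scale_left_distrib add.assoc)
      have "norm (w * a) \<le> r * norm a" using w by (simp add: norm_mult mult_right_mono)
      also have "r * norm a = r1 * (norm a / (norm a + 1))" unfolding r_def by simp
      also have "\<dots> < r1 * 1" using q r1(1) by (rule mult_strict_left_mono)
      finally have "norm ((1 + w * a) - complex_of_real 1) < r1" by simp
      thus "h (y + sX w v) = 0" unfolding eq using r1(2) by blast
    qed
  next
    case 3
    define Q where "Q = {p::complex\<times>complex. x + sX (fst p) u + sX (snd p) v \<in> \<Omega>}"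
    have oQ: "open Q" unfolding Q_def by (rule plane_open[OF vs Om 3])
    have "(0,0) \<in> Q" unfolding Q_def using xO by simp
    then obtain \<delta> where \<delta>: "\<delta> > 0" "ball (0,0) \<delta> \<subseteq> Q" using oQ open_contains_ball by blast
    have A: "h (x + sX a u + sX b v) = 0" if ab: "norm a < \<delta>/2" "norm b < \<delta>/2" for a b
    proof -
      define d where "d = sX a u + sX b v"
      obtain \<rho> where \<rho>: "\<rho> > 0" "\<forall>w. norm w < \<rho> \<longrightarrow> h (x + sX w d) = 0" using xZ by blast
      have sd: "x + sX (complex_of_real t) d \<in> \<Omega>" if t: "t \<in> {0..1}" for t
      proof -
        have nt: "norm (complex_of_real t) \<le> 1" using t by simp
        have "norm (complex_of_real t * a) \<le> norm a" "norm (complex_of_real t * b) \<le> norm b"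
          using nt by (simp_all add: norm_mult mult_left_le_one_le)
        hence "dist (complex_of_real t * a, complex_of_real t * b) (0,0) < \<delta>"
          using dist00[of "complex_of_real t * a" "complex_of_real t * b"] ab by linarith
        hence "(complex_of_real t * a, complex_of_real t * b) \<in> Q" using \<delta>(2) by (auto simp: dist_commute)
        moreover have "x + sX (complex_of_real t) d = x + sX (complex_of_real t * a) u + sX (complex_of_real t * b) v"
          unfolding d_def by (simp add: scale_right_distrib add.assoc)
        ultimately show ?thesis unfolding Q_def by (simp only: mem_Collect_eq fst_conv snd_conv)
      qed
      obtain r1 where r1: "r1 > 0" "\<forall>w. norm (w - complex_of_real 1) < r1 \<longrightarrow> h (x + sX w d) = 0"
        using line_lemma[OF vs G xO \<rho>(1) _ sd, of 1] \<rho>(2) by auto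
      have "h (x + sX 1 d) = 0" using r1(2)[rule_format, of 1] r1(1) by simp
      thus ?thesis unfolding d_def by (simp add: add.assoc)
    qed
    define K where "K = (\<lambda>t. (complex_of_real t, 0::complex)) ` {0..1}"
    have cK: "compact K" unfolding K_def
      by (intro compact_continuous_image continuous_intros) auto
    have KQ: "K \<subseteq> \<Union>{Q}" unfolding K_def Q_def using seg by auto
    obtain \<epsilon> where \<epsilon>: "\<epsilon> > 0" "\<And>k. k \<in> K \<Longrightarrow> \<exists>G\<in>{Q}. ball k \<epsilon> \<subseteq> G"
      using Heine_Borel_lemma[OF cK KQ] oQ by blast
    define r where "r = min \<epsilon> (\<delta>/2)"
    have r: "r > 0" unfolding r_def using \<epsilon> \<delta> by simp
    show ?thesis
    proof (intro exI[of _ r] conjI allI impI)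
      show "r > 0" by (rule r)
      fix b :: complex assume b: "norm b < r"
      define x' where "x' = x + sX b v"
      have bQ: "x' + sX (complex_of_real t) u \<in> \<Omega>" if t: "t \<in> {0..1}" for t
      proof -
        have "(complex_of_real t, 0) \<in> K" unfolding K_def using t by blast
        hence "ball (complex_of_real t, 0) \<epsilon> \<subseteq> Q" using \<epsilon>(2) by blast
        moreover have "dist (complex_of_real t, 0) (complex_of_real t, b) < \<epsilon>"
          using b unfolding r_def by (simp add: dist_Pair_Pair dist_norm)
        ultimately have "(complex_of_real t, b) \<in> Q" by auto
        thus ?thesis unfolding Q_def x'_def by (simp add: add_ac)
      qed
      have x'O: "x' \<in> \<Omega>" using bQ[of 0] by simp
      have z0: "h (x' + sX w u) = 0" if "norm w < \<delta>/2" for w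
        using A[of w b] that b unfolding x'_def r_def by (simp add: add_ac)
      have "\<exists>r1>0. \<forall>w. norm (w - complex_of_real 1) < r1 \<longrightarrow> h (x' + sX w u) = 0"
        apply (rule line_lemma[where \<rho>="\<delta>/2" and t=1, OF vs G x'O])
        using \<delta> z0 bQ by auto
      then obtain r1 where r1: "r1 > 0" "\<forall>w. norm (w - complex_of_real 1) < r1 \<longrightarrow> h (x' + sX w u) = 0"
        by blast
      have "h (x' + sX 1 u) = 0" using r1(2)[rule_format, of 1] r1(1) by simp
      thus "h (y + sX b v) = 0" unfolding x'_def yxu by (simp add: add_ac)
    qed
  qed
qed

lemma X_main:
  assumes vs: "vector_space sX" and G: "gat sX \<Omega> h" and Om: "d_open sX 2 \<Omega>"
    and pc: "polygonally_connected sX \<Omega>" and CO: "C \<subseteq> \<Omega>" and cC: "c \<in> C"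
    and ra: "real_absorbing sX ((\<lambda>x. x - c) ` C)" and hC: "\<And>x. x \<in> C \<Longrightarrow> h x = 0"
    and x: "x \<in> \<Omega>"
  shows "h x = 0"
proof -
  interpret vector_space sX by (rule vs)
  define P where "P z \<longleftrightarrow> z \<in> \<Omega> \<and> (\<forall>v. \<exists>r>0. \<forall>w. norm w < r \<longrightarrow> h (z + sX w v) = 0)" for z
  have c: "c \<in> \<Omega>" using CO cC by blast
  have Pc: "P c" unfolding P_def using c start_lemma[OF vs G c ra hC] by blast
  obtain ps where ps: "ps \<noteq> []" "hd ps = c" "last ps = x"
    "\<And>i. Suc i < length ps \<Longrightarrow> segm sX (ps ! i) (ps ! Suc i) \<subseteq> \<Omega>"
    using pc c x unfolding polygonally_connected_def by blast
  have "P (ps ! i)" if "i < length ps" for i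
    using that
  proof (induction i)
    case 0 thus ?case using Pc ps(1,2) hd_conv_nth by metis
  next
    case (Suc i)
    hence Pi: "P (ps ! i)" by simp
    have sg: "segm sX (ps ! i) (ps ! Suc i) \<subseteq> \<Omega>" using ps(4) Suc.prems .
    have "ps ! Suc i \<in> segm sX (ps ! i) (ps ! Suc i)" unfolding segm_def
    proof -
      have "\<exists>t. ps ! Suc i = ps ! i + sX (complex_of_real t) (ps ! Suc i - ps ! i) \<and> t \<in> {0..1}"
        by (rule exI[of _ 1]) simp
      thus "ps ! Suc i \<in> {ps ! i + sX (complex_of_real t) (ps ! Suc i - ps ! i) | t. t \<in> {0..1}}" by simp
    qed
    hence "ps ! Suc i \<in> \<Omega>" using sg by blast
    moreover have "\<forall>v. \<exists>r>0. \<forall>w. norm w < r \<longrightarrow> h (ps ! Suc i + sX w v) = 0"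
      using seg_step[OF vs G Om _ _ sg] Pi unfolding P_def by blast
    ultimately show ?case unfolding P_def by blast
  qed
  hence "P x" using ps(1,3) last_conv_nth by (metis diff_less length_greater_0_conv zero_less_one)
  then obtain r where r: "r > 0" "\<forall>w. norm w < r \<longrightarrow> h (x + sX w 0) = 0" unfolding P_def by blast
  have "h (x + sX 0 0) = 0" using r(2)[rule_format, of 0] r(1) by simp
  thus ?thesis by simp
qed



lemma tvs_cont:
  assumes tvs: "complex_tvs sc"
  shows "continuous_on UNIV (\<lambda>z::'b::{ab_group_add,topological_space}. a + sc k z)"
    and "continuous_on UNIV (\<lambda>k. sc k z)"
proof -
  have ca: "continuous_on UNIV (\<lambda>p::'b\<times>'b. fst p + snd p)" and cs: "continuous_on UNIV (\<lambda>p::complex\<times>'b. sc (fst p) (snd p))"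
    using tvs unfolding complex_tvs_def by auto
  have 1: "continuous_on UNIV (\<lambda>z. sc k z)"
    by (rule continuous_on_compose2[OF cs, of UNIV "\<lambda>z. (k,z)", simplified]) (auto intro!: continuous_intros)
  show "continuous_on UNIV (\<lambda>z. a + sc k z)"
    by (rule continuous_on_compose2[OF ca, of UNIV "\<lambda>z. (a, sc k z)", simplified]) (auto intro!: continuous_intros 1)
  show "continuous_on UNIV (\<lambda>k. sc k z)"
    by (rule continuous_on_compose2[OF cs, of UNIV "\<lambda>k. (k,z)", simplified]) (auto intro!: continuous_intros)
qed

lemma separation:
  fixes sc :: "complex \<Rightarrow> 'b \<Rightarrow> 'b::{ab_group_add,t2_space}"
  assumes tvs: "complex_tvs sc" and lc: "locally_convex sc"
    and y: "y \<notin> closure (module.span sc S)"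
  shows "\<exists>\<phi>\<in>dual_space sc. (\<forall>m\<in>module.span sc S. \<phi> m = 0) \<and> \<phi> y \<noteq> 0"
proof -
  have vsc: "vector_space sc" using tvs unfolding complex_tvs_def by auto
  interpret vector_space sc by (rule vsc)
  define M where "M = span S"
  have subM: "subspace M" unfolding M_def by simp
  define sR where "sR r z = sc (complex_of_real r) z" for r z
  have vsR: "vector_space sR" unfolding sR_def vector_space_def
    by unfold_locales (simp_all add: scale_right_distrib scale_left_distrib)
  interpret R: vector_space sR by (rule vsR)
  have sRM: "sR a m \<in> M" if "m \<in> M" for a m unfolding sR_def using subspace_scale[OF subM that] .
  have cont1: "continuous_on UNIV (\<lambda>z. a + sc k z)" for a k using tvs_cont(1)[OF tvs] .
  have cont_sc: "continuous_on UNIV (\<lambda>z. sc k z)" for k using cont1[of 0 k] by simp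
  obtain U' where U': "open U'" "y \<in> U'" "U' \<inter> M = {}"
    using y unfolding closure_iff_nhds_not_empty M_def by blast
  define U where "U = (\<lambda>z. y + sc (-1) z) -` U'"
  have "open U" unfolding U_def by (rule open_vimage[OF U'(1) cont1])
  have "0 \<in> U" using U' by (simp add: U_def)
  obtain V where V: "open V" "convex_c sc V" "0 \<in> V" "V \<subseteq> U"
    using lc \<open>open U\<close> \<open>0 \<in> U\<close> unfolding locally_convex_def by blast
  have VM: "y - v \<notin> M" if "v \<in> V" for v
  proof -
    have "y + sc (-1) v \<in> U'" using V(4) that unfolding U_def by blast
    thus ?thesis using U'(3) by auto
  qed
  have cvx: "sR (1-t) x + sR t z \<in> V" if "x\<in>V" "z\<in>V" "0 \<le> t" "t \<le> 1" for x z t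
    using V(2) that unfolding convex_c_def sR_def by auto
  have abs: "\<exists>t>0. sR t z \<in> V" for z
  proof -
    have "open ((\<lambda>k. sc k z) -` V)" by (rule open_vimage[OF V(1) tvs_cont(2)[OF tvs]])
    moreover have "0 \<in> (\<lambda>k. sc k z) -` V" using V(3) by simp
    ultimately obtain e where e: "e > 0" "ball 0 e \<subseteq> (\<lambda>k. sc k z) -` V"
      using open_contains_ball by blast
    have "complex_of_real (e/2) \<in> ball 0 e" using e by simp
    hence "sR (e/2) z \<in> V" using e unfolding sR_def by blast
    thus ?thesis using e by (intro exI[of _ "e/2"]) simp
  qed
  define p where "p z = Inf {t. 0 < t \<and> sR (inverse t) z \<in> V}" for z
  have p_eq: "\<And>z. p z = Inf {t. 0 < t \<and> sR (inverse t) z \<in> V}" by (simp add: p_def)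
  have cvx0: "\<forall>x\<in>V. \<forall>y\<in>V. \<forall>t. 0 \<le> t \<and> t \<le> 1 \<longrightarrow> sR (1-t) x + sR t y \<in> V"
    using cvx by blast
  note gp = gauge_props[OF vsR cvx0 V(3) abs p_eq]
  define G0 where "G0 = {(m + sR t y, t) | m t. m \<in> M}"
  have yM: "y \<notin> M" using y closure_subset unfolding M_def by blast
  have lg: "lin_graph sR p G0"
    unfolding lin_graph_def
  proof (intro conjI allI impI)
    fix x r s assume "(x,r)\<in>G0" "(x,s)\<in>G0"
    then obtain m1 m2 where h: "m1 \<in> M" "m2 \<in> M" "x = m1 + sR r y" "x = m2 + sR s y"
      unfolding G0_def by blast
    show "r = s"
    proof (rule ccontr)
      assume ne: "r \<noteq> s"
      have "sR (r - s) y = m2 - m1" using h(3,4) by (simp add: R.scale_left_diff_distrib algebra_simps)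
      hence "sR (inverse (r - s)) (sR (r - s) y) = sR (inverse (r - s)) (m2 - m1)" by simp
      hence "y = sR (inverse (r - s)) (m2 - m1)" using ne by simp
      moreover have "m2 - m1 \<in> M" using h subspace_diff[OF subM] by blast
      ultimately show False using yM sRM by metis
    qed
  next
    fix x r z s assume "(x,r)\<in>G0" "(z,s)\<in>G0"
    then obtain m1 m2 where h: "m1 \<in> M" "m2 \<in> M" "x = m1 + sR r y" "z = m2 + sR s y"
      unfolding G0_def by blast
    have "x + z = (m1 + m2) + sR (r + s) y" using h by (simp add: R.scale_left_distrib algebra_simps)
    moreover have "m1 + m2 \<in> M" using h subspace_add[OF subM] by blast
    ultimately show "(x + z, r + s) \<in> G0" unfolding G0_def by blast
  next
    fix a x r assume "(x,r)\<in>G0"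
    then obtain m1 where h: "m1 \<in> M" "x = m1 + sR r y" unfolding G0_def by blast
    have "sR a x = sR a m1 + sR (a * r) y" using h by (simp add: R.scale_right_distrib)
    thus "(sR a x, a * r) \<in> G0" unfolding G0_def using sRM[OF h(1)] by blast
  next
    fix x r assume "(x,r)\<in>G0"
    then obtain m where h: "m \<in> M" "x = m + sR r y" unfolding G0_def by blast
    show "r \<le> p x"
    proof (cases "r \<le> 0")
      case True thus ?thesis using gp(1)[of x] by linarith
    next
      case False
      hence r: "r > 0" by simp
      define m' where "m' = sR (inverse r) m"
      have "m' \<in> M" unfolding m'_def using sRM h by blast
      have "1 \<le> p (m' + y)"
      proof (rule ccontr)
        assume "\<not> 1 \<le> p (m' + y)"
        hence "m' + y \<in> V" using gp(4) by simp
        hence "y - (m' + y) \<notin> M" using VM by blast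
        moreover have "y - (m' + y) = - m'" by simp
        ultimately show False using \<open>m' \<in> M\<close> subspace_neg[OF subM] by metis
      qed
      moreover have "x = sR r (m' + y)" using h r unfolding m'_def by (simp add: R.scale_right_distrib)
      hence "p x = r * p (m' + y)" using gp(3)[OF r] by simp
      ultimately show ?thesis using r by simp
    qed
  qed
  have G0ne: "G0 \<noteq> {}" unfolding G0_def using subspace_0[OF subM] by blast
  obtain \<psi> where psi_add: "\<And>x z. \<psi> (x+z) = \<psi> x + \<psi> z" and psi_sc: "\<And>a x. \<psi> (sR a x) = a * \<psi> x"
    and psi_p: "\<And>x. \<psi> x \<le> p x" and psi_G0: "\<And>x r. (x,r) \<in> G0 \<Longrightarrow> \<psi> x = r"
    using HB_graph[OF vsR gp(2) gp(3) lg G0ne] by blast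
  have psiM: "\<psi> m = 0" if "m \<in> M" for m
  proof -
    have "(m + sR 0 y, 0) \<in> G0" unfolding G0_def using that by blast
    thus ?thesis using psi_G0 by simp
  qed
  have psiy: "\<psi> y = 1"
  proof -
    have "(0 + sR 1 y, 1) \<in> G0" unfolding G0_def using subspace_0[OF subM] by blast
    thus ?thesis using psi_G0 by simp
  qed
  have psi_neg: "\<psi> (- z) = - \<psi> z" for z using psi_sc[of "-1" z] by (simp add: sR_def)
  have psi_diff: "\<psi> (z - z0) = \<psi> z - \<psi> z0" for z z0
    using psi_add[of "z - z0" z0] by simp
  have bdW: "\<bar>\<psi> w\<bar> \<le> 1" if "w \<in> V" "- w \<in> V" for w
    using psi_p[of w] psi_p[of "-w"] gp(5)[OF that(1)] gp(5)[OF that(2)] psi_neg[of w] by linarith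
  have isc: "isCont \<psi> z0" for z0
    unfolding continuous_at_open
  proof (intro allI impI)
    fix T assume T: "open T \<and> \<psi> z0 \<in> T"
    then obtain e where e: "e > 0" "ball (\<psi> z0) e \<subseteq> T" using open_contains_ball by blast
    define k where "k = e / 2"
    have k: "k > 0" using e k_def by simp
    define a where "a = complex_of_real (inverse k)"
    define W where "W = (\<lambda>z. (- sc a z0) + sc a z) -` (V \<inter> (\<lambda>z. 0 + sc (-1) z) -` V)"
    have "open W" unfolding W_def
      by (intro open_vimage open_Int V(1) cont1)
    moreover have "z0 \<in> W" unfolding W_def using V(3) by simp
    moreover have "\<psi> z \<in> T" if "z \<in> W" for z
    proof -
      have "- sc a z0 + sc a z = sR (inverse k) (z - z0)"
        unfolding sR_def a_def by (simp add: scale_right_diff_distrib)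
      hence w: "sR (inverse k) (z - z0) \<in> V" "- sR (inverse k) (z - z0) \<in> V"
        using that unfolding W_def by auto
      have "\<bar>inverse k * \<psi> (z - z0)\<bar> \<le> 1" using bdW[OF w] psi_sc by simp
      hence "\<bar>\<psi> (z - z0)\<bar> \<le> k" using k by (simp add: abs_mult field_simps)
      hence "dist (\<psi> z0) (\<psi> z) < e" using k_def e psi_diff[of z z0] by (simp add: dist_real_def abs_minus_commute)
      thus ?thesis using e by auto
    qed
    ultimately show "\<exists>S. open S \<and> z0 \<in> S \<and> (\<forall>x'\<in>S. \<psi> x' \<in> T)" by blast
  qed
  have cont_psi: "continuous_on UNIV \<psi>" using isc by (simp add: continuous_on_eq_continuous_at)
  define \<phi> where "\<phi> z = complex_of_real (\<psi> z) - \<i> * complex_of_real (\<psi> (sc \<i> z))" for z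
  have phi_add: "\<phi> (x + z) = \<phi> x + \<phi> z" for x z
    unfolding \<phi>_def by (simp add: scale_right_distrib psi_add algebra_simps)
  have i_sR: "sc \<i> (sR a x) = sR a (sc \<i> x)" for a x unfolding sR_def by (simp add: mult.commute)
  have phi_real: "\<phi> (sR a x) = complex_of_real a * \<phi> x" for a x
    unfolding \<phi>_def i_sR psi_sc by (simp add: algebra_simps)
  have ii: "sc \<i> (sc \<i> x) = sR (-1) x" for x unfolding sR_def by simp
  have phi_i: "\<phi> (sc \<i> x) = \<i> * \<phi> x" for x
    unfolding \<phi>_def ii psi_sc by (simp add: algebra_simps)
  have phi_sc: "\<phi> (sc c x) = c * \<phi> x" for c x
  proof -
    have "sc c x = sc (complex_of_real (Re c) + \<i> * complex_of_real (Im c)) x" using complex_eq[of c] by simp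
    also have "\<dots> = sR (Re c) x + sc \<i> (sR (Im c) x)" unfolding sR_def by (simp add: scale_left_distrib)
    finally have "\<phi> (sc c x) = complex_of_real (Re c) * \<phi> x + \<i> * (complex_of_real (Im c) * \<phi> x)"
      by (simp add: phi_add phi_i phi_real)
    also have "\<dots> = (complex_of_real (Re c) + \<i> * complex_of_real (Im c)) * \<phi> x" by (simp add: algebra_simps)
    also have "\<dots> = c * \<phi> x" using complex_eq[of c] by simp
    finally show ?thesis .
  qed
  have lin: "Vector_Spaces.linear sc (*) \<phi>"
    unfolding Vector_Spaces.linear_def module_hom_def module_hom_axioms_def
  proof (intro conjI allI)
    show "vector_space sc" by (rule vsc)
    show v2: "vector_space ((*) :: complex \<Rightarrow> complex \<Rightarrow> complex)"
      by (rule vector_space_over_itself.vector_space_axioms)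
    show "module sc" using vsc unfolding vector_space_def module_def by blast
    show "module ((*) :: complex \<Rightarrow> complex \<Rightarrow> complex)" using v2 unfolding vector_space_def module_def by blast
  qed (simp_all add: phi_add phi_sc)
  have cont: "continuous_on UNIV \<phi>"
    unfolding \<phi>_def
    by (intro continuous_intros continuous_on_compose2[OF cont_psi cont_sc] continuous_on_compose2[OF cont_psi continuous_on_id]) auto
  have "\<phi> \<in> dual_space sc" unfolding dual_space_def using lin cont by blast
  moreover have "\<forall>m\<in>M. \<phi> m = 0"
  proof
    fix m assume "m \<in> M"
    moreover hence "sc \<i> m \<in> M" using subspace_scale[OF subM] by blast
    ultimately show "\<phi> m = 0" unfolding \<phi>_def using psiM by simp
  qed
  moreover have "\<phi> y \<noteq> 0"
  proof
    assume "\<phi> y = 0"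
    hence "Re (\<phi> y) = 0" by simp
    thus False unfolding \<phi>_def using psiy by simp
  qed
  ultimately show ?thesis unfolding M_def by blast
qed


theorem mainTheorem4:
  fixes scaleX :: "complex \<Rightarrow> 'a \<Rightarrow> 'a::ab_group_add"
    and scaleY :: "complex \<Rightarrow> 'b \<Rightarrow> 'b::{ab_group_add,t2_space}"
    and \<Omega> C :: "'a set" and c :: 'a and f :: "'a \<Rightarrow> 'b"
  assumes X: "vector_space scaleX"
    and dimX: "\<exists>x y. x \<noteq> y \<and> \<not> module.dependent scaleX {x, y}"
    and Y: "complex_tvs scaleY" "locally_convex scaleY" "sequentially_complete TYPE('b)"
    and Ynz: "\<exists>y::'b. y \<noteq> 0"
    and Om: "d_open scaleX 2 \<Omega>" "polygonally_connected scaleX \<Omega>"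
    and C: "C \<subseteq> \<Omega>" "c \<in> C" "real_absorbing scaleX ((\<lambda>x. x - c) ` C)"
    and f: "gateaux_holomorphic scaleX scaleY \<Omega> f"
  shows "(\<lambda>x. f x - f c) ` \<Omega> \<subseteq> closure (module.span scaleY ((\<lambda>x. f x - f c) ` C)) \<and>
         ((\<forall>x\<in>\<Omega>. f x = 0) \<longleftrightarrow> (\<forall>x\<in>C. f x = 0))"
proof -
  have vsY: "vector_space scaleY" using Y(1) unfolding complex_tvs_def by auto
  interpret vector_space scaleY by (rule vsY)
  define S where "S = (\<lambda>x. f x - f c) ` C"
  have part1: "(\<lambda>x. f x - f c) ` \<Omega> \<subseteq> closure (span S)"
  proof
    fix y assume "y \<in> (\<lambda>x. f x - f c) ` \<Omega>"
    then obtain x0 where x0: "x0 \<in> \<Omega>" "y = f x0 - f c" by blast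
    show "y \<in> closure (span S)"
    proof (rule ccontr)
      assume "y \<notin> closure (span S)"
      from separation[OF Y(1) Y(2) this] obtain \<phi> where
        \<phi>: "\<phi> \<in> dual_space scaleY" "\<forall>m\<in>span S. \<phi> m = 0" "\<phi> y \<noteq> 0" by blast
      have lin: "Vector_Spaces.linear scaleY (*) \<phi>" using \<phi>(1) unfolding dual_space_def by blast
      have padd: "\<phi> (a + b) = \<phi> a + \<phi> b" for a b
        using lin unfolding Vector_Spaces.linear_def module_hom_def module_hom_axioms_def by blast
      have pdiff: "\<phi> (a - b) = \<phi> a - \<phi> b" for a b
        using padd[of "a - b" b] by simp
      define h where "h x = \<phi> (f x) - \<phi> (f c)" for x
      have G: "gat scaleX \<Omega> h"
        unfolding gat_def
      proof (intro ballI allI)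
        fix a v assume a: "a \<in> \<Omega>"
        obtain r where r: "r > 0" "\<forall>w\<in>ball 0 r. a + scaleX w v \<in> \<Omega>"
          "(\<lambda>w. \<phi> (f (a + scaleX w v))) holomorphic_on ball 0 r"
          using f a \<phi>(1) unfolding gateaux_holomorphic_def by blast
        have "(\<lambda>w. h (a + scaleX w v)) holomorphic_on ball 0 r"
          unfolding h_def by (intro holomorphic_on_diff r(3) holomorphic_on_const)
        thus "\<exists>r>0. (\<forall>w\<in>ball 0 r. a + scaleX w v \<in> \<Omega>) \<and> (\<lambda>w. h (a + scaleX w v)) holomorphic_on ball 0 r"
          using r by blast
      qed
      have hC: "h x = 0" if "x \<in> C" for x
      proof -
        have "f x - f c \<in> span S" using that unfolding S_def by (intro span_base) blast
        hence "\<phi> (f x - f c) = 0" using \<phi>(2) by blast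
        thus ?thesis unfolding h_def pdiff .
      qed
      have "h x0 = 0" by (rule X_main[OF X G Om(1) Om(2) C(1) C(2) C(3) hC x0(1)])
      hence "\<phi> y = 0" unfolding h_def x0(2) pdiff .
      thus False using \<phi>(3) by blast
    qed
  qed
  moreover have "(\<forall>x\<in>\<Omega>. f x = 0) \<longleftrightarrow> (\<forall>x\<in>C. f x = 0)"
  proof
    assume "\<forall>x\<in>\<Omega>. f x = 0" thus "\<forall>x\<in>C. f x = 0" using C(1) by blast
  next
    assume fC: "\<forall>x\<in>C. f x = 0"
    hence fc: "f c = 0" using C(2) by blast
    have "S \<subseteq> {0}" unfolding S_def using fC fc by auto
    hence "span S \<subseteq> {0}" by (intro span_minimal) simp_all
    hence "closure (span S) \<subseteq> {0}" using closure_mono[of "span S" "{0}"] by simp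
    thus "\<forall>x\<in>\<Omega>. f x = 0" using part1 fc by auto
  qed
  ultimately show ?thesis unfolding S_def by blast
qed

end
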